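(* Let $(N,J,h)$ be a 2-dimensional almost Norden manifold of constant sectional curvature $k'$ and let $(\mathcal{C}(N),\varphi,\xi,\eta,g)$ be the cone over it (constructed as in the context). Then for $(\mathcal{C}(N),\varphi,\xi,\eta,g)$: (1) the sectional curvatures of all non-degenerate $\xi$-sections vanish; (2) $\tau^*=0$; (3) $\tau^{**}=\tau$.
   Context: An almost Norden manifold $(N,J,h)$ is a manifold $N$ with an almost complex structure $J$ and a pseudo-Riemannian metric $h$ satisfying $h(Jx,Jy)=-h(x,y)$; constant sectional curvature $k'$ means its curvature tensor is $R'(x,y,z,w)=k'\{h(y,z)h(x,w)-h(x,z)h(y,w)\}$. The cone is $\mathcal{C}(N)=\mathbb{R}^+\times N$, $t$ the coordinate on $\mathbb{R}^+=(0,\infty)$, with metric $g=t^2h+\mathrm{d}t^2$ and structure $\xi=\tfrac{\mathrm{d}}{\mathrm{d}t}$, $\eta=\mathrm{d}t$, $\varphi=J$ on vectors tangent to $N$, $\varphi\xi=0$. Let $\nabla$ be the Levi-Civita connection of $g$, $R(x,y)=\nabla_x\nabla_y-\nabla_y\nabla_x-\nabla_{[x,y]}$, $R(x,y,z,w)=g(R(x,y)z,w)$. For a basis $\{e_i\}$ with $(g^{ij})$ the inverse of $(g(e_i,e_j))$ (summation convention): $\rho(y,z)=g^{ij}R(e_i,y,z,e_j)$, $\rho^*(y,z)=g^{ij}R(e_i,y,z,\varphi e_j)$, $\tau=g^{ij}\rho(e_i,e_j)$, $\tau^*=g^{ij}\rho^*(e_i,e_j)$, $\tau^{**}=g^{ij}\rho^*(e_i,\varphi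 e_j)$. The sectional curvature of a non-degenerate 2-plane $\alpha$ with orthogonal basis $\{x,y\}$ is $k(\alpha)=R(x,y,y,x)/(g(x,x)g(y,y))$; $\alpha$ is a $\xi$-section if $\xi\in\alpha$. *)

theory Defs
  imports "HOL-Analysis.Analysis"
begin

text \<open>Local-coordinate (chart) calculus. Points of a chart are vectors in real^'n,
  tensors are given by their components in the coordinate frame e_i = axis i 1.\<close>

definition pd :: "'n::finite \<Rightarrow> (real^'n \<Rightarrow> real) \<Rightarrow> real^'n \<Rightarrow> real" where
  "pd i f x = frechet_derivative f (at x) (axis i 1)"

fun iter_pd :: "'n::finite list \<Rightarrow> (real^'n \<Rightarrow> real) \<Rightarrow> real^'n \<Rightarrow> real" where
  "iter_pd [] f = f"
| "iter_pd (i # is) f = pd i (iter_pd is f)"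

definition smooth_fun :: "(real^'n::finite) set \<Rightarrow> (real^'n \<Rightarrow> real) \<Rightarrow> bool" where
  "smooth_fun U f \<longleftrightarrow> (\<forall>is. \<forall>x\<in>U. iter_pd is f differentiable (at x))"

definition bil :: "real^'n^'n \<Rightarrow> real^'n \<Rightarrow> real^'n \<Rightarrow> real" where
  "bil A X Y = X \<bullet> (A *v Y)"

text \<open>Christoffel symbols of the Levi-Civita connection:
  nabla_(e_i) e_j = sum_k Gamma^k_ij e_k.\<close>
definition christoffel :: "(real^'n \<Rightarrow> real^'n^'n) \<Rightarrow> real^'n \<Rightarrow> 'n::finite \<Rightarrow> 'n \<Rightarrow> 'n \<Rightarrow> real" where
  "christoffel g x k i j =
     (\<Sum>l\<in>UNIV. matrix_inv (g x) $ k $ l *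
        (pd i (\<lambda>y. g y $ j $ l) x + pd j (\<lambda>y. g y $ i $ l) x - pd l (\<lambda>y. g y $ i $ j) x)) / 2"

text \<open>Components of R(x,y) = nabla_x nabla_y - nabla_y nabla_x - nabla_[x,y]:
  R(e_i,e_j) e_k = sum_l R^l_ijk e_l.\<close>
definition curv_comp :: "(real^'n \<Rightarrow> real^'n^'n) \<Rightarrow> real^'n \<Rightarrow> 'n::finite \<Rightarrow> 'n \<Rightarrow> 'n \<Rightarrow> 'n \<Rightarrow> real" where
  "curv_comp g x i j k l =
     pd i (\<lambda>y. christoffel g y l j k) x - pd j (\<lambda>y. christoffel g y l i k) x
     + (\<Sum>m\<in>UNIV. christoffel g x l i m * christoffel g x m j k
                 - christoffel g x l j m * christoffel g x m i k)"

definition curv4 :: "(real^'n \<Rightarrow> real^'n^'n) \<Rightarrow> real^'n \<Rightarrow> real^'n \<Rightarrow> real^'n \<Rightarrow> real^'n \<Rightarrow> real^'n::finite \<Rightarrow> real" where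
  "curv4 g x X Y Z W =
     (\<Sum>i\<in>UNIV. \<Sum>j\<in>UNIV. \<Sum>k\<in>UNIV. \<Sum>l\<in>UNIV. \<Sum>m\<in>UNIV.
        X $ i * Y $ j * Z $ k * W $ m * curv_comp g x i j k l * g x $ l $ m)"

definition rho :: "(real^'n \<Rightarrow> real^'n^'n) \<Rightarrow> real^'n \<Rightarrow> real^'n \<Rightarrow> real^'n::finite \<Rightarrow> real" where
  "rho g x Y Z = (\<Sum>i\<in>UNIV. \<Sum>j\<in>UNIV. matrix_inv (g x) $ i $ j * curv4 g x (axis i 1) Y Z (axis j 1))"

definition rho_star :: "(real^'n \<Rightarrow> real^'n^'n) \<Rightarrow> (real^'n \<Rightarrow> real^'n^'n) \<Rightarrow> real^'n \<Rightarrow> real^'n \<Rightarrow> real^'n::finite \<Rightarrow> real" where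
  "rho_star g Phi x Y Z = (\<Sum>i\<in>UNIV. \<Sum>j\<in>UNIV. matrix_inv (g x) $ i $ j * curv4 g x (axis i 1) Y Z (Phi x *v axis j 1))"

definition tau :: "(real^'n \<Rightarrow> real^'n^'n) \<Rightarrow> real^'n::finite \<Rightarrow> real" where
  "tau g x = (\<Sum>i\<in>UNIV. \<Sum>j\<in>UNIV. matrix_inv (g x) $ i $ j * rho g x (axis i 1) (axis j 1))"

definition tau_star :: "(real^'n \<Rightarrow> real^'n^'n) \<Rightarrow> (real^'n \<Rightarrow> real^'n^'n) \<Rightarrow> real^'n::finite \<Rightarrow> real" where
  "tau_star g Phi x = (\<Sum>i\<in>UNIV. \<Sum>j\<in>UNIV. matrix_inv (g x) $ i $ j * rho_star g Phi x (axis i 1) (axis j 1))"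

definition tau_star_star :: "(real^'n \<Rightarrow> real^'n^'n) \<Rightarrow> (real^'n \<Rightarrow> real^'n^'n) \<Rightarrow> real^'n::finite \<Rightarrow> real" where
  "tau_star_star g Phi x = (\<Sum>i\<in>UNIV. \<Sum>j\<in>UNIV. matrix_inv (g x) $ i $ j * rho_star g Phi x (axis i 1) (Phi x *v axis j 1))"

definition almost_norden_chart :: "(real^'n) set \<Rightarrow> (real^'n \<Rightarrow> real^'n^'n) \<Rightarrow> (real^'n \<Rightarrow> real^'n^'n) \<Rightarrow> bool" where
  "almost_norden_chart U J h \<longleftrightarrow>
     open U \<and>
     (\<forall>i j. smooth_fun U (\<lambda>x. h x $ i $ j) \<and> smooth_fun U (\<lambda>x. J x $ i $ j)) \<and>
     (\<forall>x\<in>U. transpose (h x) = h x \<and> invertible (h x)) \<and>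
     (\<forall>x\<in>U. J x ** J x = - mat 1) \<and>
     (\<forall>x\<in>U. \<forall>X Y. bil (h x) (J x *v X) (J x *v Y) = - bil (h x) X Y)"

definition const_sect_curv :: "(real^'n) set \<Rightarrow> (real^'n \<Rightarrow> real^'n^'n::finite) \<Rightarrow> real \<Rightarrow> bool" where
  "const_sect_curv U h k' \<longleftrightarrow>
     (\<forall>x\<in>U. \<forall>X Y Z W. curv4 h x X Y Z W
        = k' * (bil (h x) Y Z * bil (h x) X W - bil (h x) X Z * bil (h x) Y W))"

text \<open>Cone chart: coordinates (t, u) with index Inl () for t and Inr i for u_i.\<close>
definition cone_base :: "real^(unit + 'n::finite) \<Rightarrow> real^'n" where
  "cone_base P = (\<chi> i. P $ Inr i)"

definition cone_t :: "real^(unit + 'n::finite) \<Rightarrow> real" where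
  "cone_t P = P $ Inl ()"

definition cone_domain :: "(real^'n::finite) set \<Rightarrow> (real^(unit + 'n)) set" where
  "cone_domain U = {P. cone_t P > 0 \<and> cone_base P \<in> U}"

definition cone_metric :: "(real^'n \<Rightarrow> real^'n^'n) \<Rightarrow> real^(unit + 'n::finite) \<Rightarrow> real^(unit + 'n)^(unit + 'n)" where
  "cone_metric h P = (\<chi> a b. case (a, b) of
       (Inl _, Inl _) \<Rightarrow> 1
     | (Inr i, Inr j) \<Rightarrow> (cone_t P)^2 * h (cone_base P) $ i $ j
     | _ \<Rightarrow> 0)"

definition cone_phi :: "(real^'n \<Rightarrow> real^'n^'n) \<Rightarrow> real^(unit + 'n::finite) \<Rightarrow> real^(unit + 'n)^(unit + 'n)" where
  "cone_phi J P = (\<chi> a b. case (a, b) of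
       (Inr i, Inr j) \<Rightarrow> J (cone_base P) $ i $ j
     | _ \<Rightarrow> 0)"

definition cone_xi :: "real^(unit + 'n::finite)" where
  "cone_xi = axis (Inl ()) 1"

end

theory Submission
  imports Defs
begin

lemma pd_deriv: "(f has_derivative D) (at x) \<Longrightarrow> pd i f x = D (axis i 1)"
  unfolding pd_def using frechet_derivative_at by metis

lemma pd_local:
  assumes "open S" "x \<in> S" "\<And>y. y \<in> S \<Longrightarrow> f y = g y"
  shows "pd i f x = pd i g x"
proof -
  have "\<And>D. (f has_derivative D) (at x) \<longleftrightarrow> (g has_derivative D) (at x)"
    using has_derivative_transform_within_open[OF _ assms(1,2)] assms(3) by metis
  then show ?thesis unfolding pd_def frechet_derivative_def by simp
qed

lemma pd_dif: "f differentiable (at x) \<Longrightarrow> (f has_derivative (\<lambda>v. frechet_derivative f (at x) v)) (at x)"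
  using frechet_derivative_works by (metis eta_contract_eq)

lemma pd_const[simp]: "pd i (\<lambda>y. c) x = 0"
  by (rule pd_deriv[where D="\<lambda>v. 0"]) (rule has_derivative_const)

lemma pd_add: "f differentiable (at x) \<Longrightarrow> g differentiable (at x) \<Longrightarrow>
   pd i (\<lambda>y. f y + g y) x = pd i f x + pd i g x"
  unfolding pd_def[of i f] pd_def[of i g]
  by (rule pd_deriv, intro has_derivative_add pd_dif)

lemma pd_diff: "f differentiable (at x) \<Longrightarrow> g differentiable (at x) \<Longrightarrow>
   pd i (\<lambda>y. f y - g y) x = pd i f x - pd i g x"
  unfolding pd_def[of i f] pd_def[of i g]
  by (rule pd_deriv, intro has_derivative_diff pd_dif)

lemma pd_minus: "f differentiable (at x) \<Longrightarrow> pd i (\<lambda>y. - f y) x = - pd i f x"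
  unfolding pd_def[of i f]
  by (rule pd_deriv, intro has_derivative_minus pd_dif)

lemma pd_mult: "f differentiable (at x) \<Longrightarrow> g differentiable (at x) \<Longrightarrow>
   pd i (\<lambda>y. f y * g y) x = f x * pd i g x + pd i f x * g x"
  unfolding pd_def[of i f] pd_def[of i g]
  by (rule pd_deriv, intro has_derivative_mult pd_dif)

lemma pd_cmult: "f differentiable (at x) \<Longrightarrow> pd i (\<lambda>y. c * f y) x = c * pd i f x"
  using pd_mult[of "\<lambda>y. c" x f i] by simp

lemma pd_sum: "finite A \<Longrightarrow> (\<And>a. a \<in> A \<Longrightarrow> f a differentiable (at x)) \<Longrightarrow>
   pd i (\<lambda>y. \<Sum>a\<in>A. f a y) x = (\<Sum>a\<in>A. pd i (f a) x)"
proof (induction A rule: finite_induct)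
  case empty then show ?case by simp
next
  case (insert a A)
  have "pd i (\<lambda>y. \<Sum>a\<in>insert a A. f a y) x = pd i (\<lambda>y. f a y + (\<Sum>a\<in>A. f a y)) x"
    using insert by simp
  also have "\<dots> = pd i (f a) x + pd i (\<lambda>y. \<Sum>a\<in>A. f a y) x"
    using insert by (intro pd_add) (auto intro!: differentiable_sum)
  finally show ?case using insert by simp
qed

lemma bl_base: "bounded_linear (cone_base :: real^(unit+'n::finite) \<Rightarrow> real^'n)"
proof -
  have "linear (cone_base :: real^(unit+'n::finite) \<Rightarrow> real^'n)"
    by (rule linearI) (auto simp: cone_base_def vec_eq_iff)
  then show ?thesis using linear_conv_bounded_linear by blast
qed

lemma bl_t: "bounded_linear (cone_t :: real^(unit+'n::finite) \<Rightarrow> real)"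
  unfolding cone_t_def by (rule bounded_linear_vec_nth)

lemma base_axis_Inl[simp]: "cone_base (axis (Inl ()) 1 :: real^(unit+'n::finite)) = 0"
  by (auto simp: cone_base_def axis_def vec_eq_iff)
lemma base_axis_Inr[simp]: "cone_base (axis (Inr i) 1 :: real^(unit+'n::finite)) = axis i 1"
  by (auto simp: cone_base_def axis_def vec_eq_iff)
lemma t_axis_Inl[simp]: "cone_t (axis (Inl ()) 1 :: real^(unit+'n::finite)) = 1"
  by (auto simp: cone_t_def axis_def)
lemma t_axis_Inr[simp]: "cone_t (axis (Inr i) 1 :: real^(unit+'n::finite)) = 0"
  by (auto simp: cone_t_def axis_def)

lemma diff_base: "f differentiable (at (cone_base P)) \<Longrightarrow> (\<lambda>y. f (cone_base y)) differentiable (at P)"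
  using differentiable_chain_at[of cone_base P f] bl_base bounded_linear_imp_differentiable
  by (auto simp: o_def)

lemma diff_t: "cone_t differentiable (at P)"
  using bl_t bounded_linear_imp_differentiable by blast

lemma pd_base: "f differentiable (at (cone_base P)) \<Longrightarrow>
  pd a (\<lambda>y. f (cone_base y)) P = (case a of Inl _ \<Rightarrow> 0 | Inr i \<Rightarrow> pd i f (cone_base P))"
proof -
  assume f: "f differentiable (at (cone_base P))"
  have "((\<lambda>y. f (cone_base y)) has_derivative (\<lambda>v. frechet_derivative f (at (cone_base P)) (cone_base v))) (at P)"
    using diff_chain_at[OF bounded_linear_imp_has_derivative[OF bl_base] pd_dif[OF f]] by (simp add: o_def)
  then have "pd a (\<lambda>y. f (cone_base y)) P = frechet_derivative f (at (cone_base P)) (cone_base (axis a 1))"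
    by (rule pd_deriv)
  moreover have "frechet_derivative f (at (cone_base P)) 0 = 0"
    using linear_0[OF has_derivative_linear[OF pd_dif[OF f]]] by simp
  ultimately show ?thesis by (cases a) (auto simp: pd_def)
qed

lemma pd_t: "pd a cone_t P = (case a of Inl _ \<Rightarrow> 1 | Inr i \<Rightarrow> 0)"
  using pd_deriv[OF bounded_linear_imp_has_derivative[OF bl_t], of a P]
  by (cases a) auto


lemma inv_props: "invertible A \<Longrightarrow> A ** matrix_inv A = mat 1 \<and> matrix_inv A ** A = mat 1"
  unfolding invertible_def matrix_inv_def by (rule someI_ex)

lemma matrix_inv_unique:
  fixes A :: "'a::comm_ring_1^'n^'n"
  assumes "A ** B = mat 1" "B ** A = mat 1" shows "matrix_inv A = B"
proof -
  have inv: "invertible A" using assms unfolding invertible_def by blast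
  let ?A' = "matrix_inv A"
  have "?A' = ?A' ** (A ** B)" using assms by simp
  also have "\<dots> = (?A' ** A) ** B" by (simp add: matrix_mul_assoc)
  also have "\<dots> = B" using inv_props[OF inv] by simp
  finally show ?thesis .
qed

lemma sum_cone: "(\<Sum>a\<in>(UNIV::(unit+'n::finite) set). f a) = f (Inl ()) + (\<Sum>i\<in>UNIV. f (Inr i))"
proof -
  have "(\<Sum>a\<in>(UNIV::(unit+'n::finite) set). f a) = (\<Sum>a\<in>(UNIV <+> UNIV). f a)" by simp
  also have "\<dots> = (\<Sum>a\<in>UNIV. f (Inl a)) + (\<Sum>i\<in>UNIV. f (Inr i))"
    by (subst sum.Plus) (auto simp: o_def)
  also have "(\<Sum>a\<in>(UNIV::unit set). f (Inl a)) = f (Inl ())"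
    by (simp add: UNIV_unit)
  finally show ?thesis by simp
qed

lemma g_entries[simp]:
  "cone_metric h P $ Inl a $ Inl b = 1"
  "cone_metric h P $ Inl a $ Inr j = 0"
  "cone_metric h P $ Inr i $ Inl b = 0"
  "cone_metric h P $ Inr i $ Inr j = cone_t P ^ 2 * h (cone_base P) $ i $ j"
  by (simp_all add: cone_metric_def)

lemma phi_entries[simp]:
  "cone_phi J P $ Inl a $ b = 0"
  "cone_phi J P $ Inr i $ Inl c = 0"
  "cone_phi J P $ Inr i $ Inr j = J (cone_base P) $ i $ j"
  by (simp_all add: cone_phi_def split: sum.splits)

definition Ginv :: "(real^'n \<Rightarrow> real^'n^'n) \<Rightarrow> real^(unit + 'n::finite) \<Rightarrow> real^(unit + 'n)^(unit + 'n)" where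
  "Ginv h P = (\<chi> a b. case (a, b) of
       (Inl _, Inl _) \<Rightarrow> 1
     | (Inr i, Inr j) \<Rightarrow> matrix_inv (h (cone_base P)) $ i $ j / (cone_t P)^2
     | _ \<Rightarrow> 0)"

lemma Ginv_entries[simp]:
  "Ginv h P $ Inl a $ Inl b = 1"
  "Ginv h P $ Inl a $ Inr j = 0"
  "Ginv h P $ Inr i $ Inl b = 0"
  "Ginv h P $ Inr i $ Inr j = matrix_inv (h (cone_base P)) $ i $ j / cone_t P ^ 2"
  by (simp_all add: Ginv_def)

lemma mat1_entry: "(mat 1 :: 'a::zero_neq_one^'n^'n) $ i $ j = (if i = j then 1 else 0)"
  by (simp add: mat_def)

lemma ginv_formula:
  assumes "cone_t P \<noteq> 0" "invertible (h (cone_base P))"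
  shows "matrix_inv (cone_metric h P) = Ginv h P"
proof (rule matrix_inv_unique)
  let ?H = "h (cone_base P)"
  have hi: "?H ** matrix_inv ?H = mat 1" "matrix_inv ?H ** ?H = mat 1" using inv_props[OF assms(2)] by auto
  have e1: "(\<Sum>k\<in>UNIV. ?H $ i $ k * matrix_inv ?H $ k $ j) = (if i = j then 1 else 0)" for i j
    using arg_cong[OF hi(1), of "\<lambda>M. M $ i $ j"] by (simp add: matrix_matrix_mult_def mat1_entry)
  have e2: "(\<Sum>k\<in>UNIV. matrix_inv ?H $ i $ k * ?H $ k $ j) = (if i = j then 1 else 0)" for i j
    using arg_cong[OF hi(2), of "\<lambda>M. M $ i $ j"] by (simp add: matrix_matrix_mult_def mat1_entry)
  have s1: "(\<Sum>k\<in>UNIV. cone_t P ^ 2 * ?H $ i $ k * (matrix_inv ?H $ k $ j / cone_t P ^ 2)) = (if i = j then 1 else 0)" for i j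
    using e1[of i j] assms(1) by (simp add: sum_divide_distrib[symmetric] sum_distrib_left[symmetric] mult.assoc)
  have s2: "(\<Sum>k\<in>UNIV. matrix_inv ?H $ i $ k / cone_t P ^ 2 * (cone_t P ^ 2 * ?H $ k $ j)) = (if i = j then 1 else 0)" for i j
  proof -
    have "(\<Sum>k\<in>UNIV. matrix_inv ?H $ i $ k / cone_t P ^ 2 * (cone_t P ^ 2 * ?H $ k $ j)) = (\<Sum>k\<in>UNIV. matrix_inv ?H $ i $ k * ?H $ k $ j)"
      using assms(1) by (intro sum.cong) auto
    then show ?thesis using e2 by simp
  qed
  show "cone_metric h P ** Ginv h P = mat 1"
    unfolding vec_eq_iff
  proof (intro allI)
    fix a b :: "unit + 'a"
    show "(cone_metric h P ** Ginv h P) $ a $ b = mat 1 $ a $ b"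
      by (cases a; cases b) (auto simp: matrix_matrix_mult_def sum_cone mat1_entry s1 e1 assms(1))
  qed
  show "Ginv h P ** cone_metric h P = mat 1"
    unfolding vec_eq_iff
  proof (intro allI)
    fix a b :: "unit + 'a"
    show "(Ginv h P ** cone_metric h P) $ a $ b = mat 1 $ a $ b"
      by (cases a; cases b) (auto simp: matrix_matrix_mult_def sum_cone mat1_entry s2 e2 assms(1))
  qed
qed


definition CF :: "(real^'n \<Rightarrow> real^'n^'n) \<Rightarrow> unit+'n::finite \<Rightarrow> unit+'n \<Rightarrow> unit+'n \<Rightarrow> real^(unit+'n) \<Rightarrow> real" where
"CF h a b c y = (case a of
    Inl _ \<Rightarrow> (case (b,c) of (Inr j, Inr k) \<Rightarrow> - cone_t y * h (cone_base y) $ j $ k | _ \<Rightarrow> 0)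
  | Inr l \<Rightarrow> (case (b,c) of
       (Inl _, Inr k) \<Rightarrow> (if l = k then 1 / cone_t y else 0)
     | (Inr k, Inl _) \<Rightarrow> (if l = k then 1 / cone_t y else 0)
     | (Inr j, Inr k) \<Rightarrow> christoffel h (cone_base y) l j k
     | _ \<Rightarrow> 0))"

lemma CF_simps[simp]:
  "CF h (Inl a) (Inr j) (Inr k) y = - cone_t y * h (cone_base y) $ j $ k"
  "CF h (Inl a) (Inl b) c y = 0"
  "CF h (Inl a) bb (Inl c') y = 0"
  "CF h (Inr l) (Inl b) (Inr k) y = (if l = k then 1 / cone_t y else 0)"
  "CF h (Inr l) (Inr k) (Inl b) y = (if l = k then 1 / cone_t y else 0)"
  "CF h (Inr l) (Inr j) (Inr k) y = christoffel h (cone_base y) l j k"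
  "CF h (Inr l) (Inl b) (Inl c') y = 0"
  by (simp_all add: CF_def split: sum.splits)

lemma pd_t2: "pd c (\<lambda>z. cone_t z ^ 2) P = (case c of Inl _ \<Rightarrow> 2 * cone_t P | Inr _ \<Rightarrow> 0)"
proof -
  have "pd c (\<lambda>z. cone_t z ^ 2) P = pd c (\<lambda>z. cone_t z * cone_t z) P" by (simp add: power2_eq_square)
  also have "\<dots> = cone_t P * pd c cone_t P + pd c cone_t P * cone_t P"
    using pd_mult[OF diff_t diff_t] by (metis eta_contract_eq)
  finally show ?thesis by (cases c) (auto simp: pd_t)
qed

locale cone_setup =
  fixes U :: "(real^'n::finite) set" and h :: "real^'n \<Rightarrow> real^'n^'n"
  assumes oU: "open U"
  and hdiff: "\<And>i j x. x \<in> U \<Longrightarrow> (\<lambda>y. h y $ i $ j) differentiable (at x)"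
  and hsym: "\<And>x i j. x \<in> U \<Longrightarrow> h x $ i $ j = h x $ j $ i"
  and hinvt: "\<And>x. x \<in> U \<Longrightarrow> invertible (h x)"
  and Gdiff: "\<And>l j k x. x \<in> U \<Longrightarrow> (\<lambda>y. christoffel h y l j k) differentiable (at x)"
begin

lemma oD: "open (cone_domain U)"
proof -
  have "cone_domain U = {P. 0 < cone_t P} \<inter> cone_base -` U"
    by (auto simp: cone_domain_def)
  moreover have "open {P::real^(unit+'n). 0 < cone_t P}"
    by (rule open_Collect_less) (auto intro: continuous_intros linear_continuous_on bounded_linear.linear bl_t
        simp: cone_t_def)
  moreover have "open (cone_base -` U :: (real^(unit+'n)) set)"
    using oU by (intro open_vimage linear_continuous_on bl_base)
  ultimately show ?thesis by auto
qed

lemma inD: "P \<in> cone_domain U \<Longrightarrow> cone_t P > 0 \<and> cone_base P \<in> U"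
  by (auto simp: cone_domain_def)

lemma pd_gInl[simp]: "pd c (\<lambda>z. cone_metric h z $ Inl a $ b) y = 0"
  by (cases b) simp_all
lemma pd_gInrInl[simp]: "pd c (\<lambda>z. cone_metric h z $ Inr i $ Inl b) y = 0"
  by simp

lemma pd_gInrInr:
  assumes "y \<in> cone_domain U"
  shows "pd c (\<lambda>z. cone_t z ^ 2 * h (cone_base z) $ i $ j) y =
     (case c of Inl _ \<Rightarrow> 2 * cone_t y * h (cone_base y) $ i $ j
       | Inr k \<Rightarrow> cone_t y ^ 2 * pd k (\<lambda>u. h u $ i $ j) (cone_base y))"
proof -
  have d: "(\<lambda>u. h u $ i $ j) differentiable (at (cone_base y))" using hdiff inD[OF assms] by blast
  have eq: "pd c (\<lambda>z. cone_t z ^ 2 * h (cone_base z) $ i $ j) y = cone_t y ^ 2 * pd c (\<lambda>z. (\<lambda>u. h u $ i $ j) (cone_base z)) y + pd c (\<lambda>z. cone_t z ^ 2) y * h (cone_base y) $ i $ j"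
    by (rule pd_mult[of "\<lambda>z. cone_t z ^ 2" y "\<lambda>z. h (cone_base z) $ i $ j" c, simplified])
       (auto intro!: diff_base[of "\<lambda>u. h u $ i $ j", simplified] d differentiable_power diff_t)
  show ?thesis using eq pd_base[OF d, of c] pd_t2[of c y] by (cases c) auto
qed

lemma chr:
  assumes y: "y \<in> cone_domain U"
  shows "christoffel (cone_metric h) y a b c = CF h a b c y"
proof -
  have t: "cone_t y > 0" and u: "cone_base y \<in> U" using inD[OF y] by auto
  note gi = ginv_formula[of y h, OF _ hinvt[OF u]]
  let ?H = "h (cone_base y)"
  have hi: "?H ** matrix_inv ?H = mat 1" "matrix_inv ?H ** ?H = mat 1" using inv_props[OF hinvt[OF u]] by auto
  have e2: "(\<Sum>k\<in>UNIV. matrix_inv ?H $ i $ k * ?H $ k $ j) = (if i = j then 1 else 0)" for i j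
    using arg_cong[OF hi(2), of "\<lambda>M. M $ i $ j"] by (simp add: matrix_matrix_mult_def mat1_entry)
  show ?thesis
  proof (cases a)
    case (Inl a')
    then show ?thesis using t
      by (cases b; cases c) (auto simp: christoffel_def gi sum_cone pd_gInrInr[OF y])
  next
    case (Inr l)
    show ?thesis
    proof (cases b)
      case (Inl b')
      then show ?thesis
      proof (cases c)
        case (Inl c') then show ?thesis using Inr Inl `b = _` t by (auto simp: christoffel_def gi sum_cone)
      next
        case (Inr k)
        have "(\<Sum>m\<in>UNIV. matrix_inv ?H $ l $ m / cone_t y ^ 2 * (2 * cone_t y * ?H $ k $ m)) / 2
              = (\<Sum>m\<in>UNIV. matrix_inv ?H $ l $ m * ?H $ m $ k) / cone_t y"
          using t hsym[OF u] by (simp add: sum_divide_distrib sum_distrib_left power2_eq_square field_simps)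
        then show ?thesis using Inr `a = _` `b = _` t e2
          by (auto simp: christoffel_def gi sum_cone pd_gInrInr[OF y])
      qed
    next
      case (Inr j)
      then show ?thesis
      proof (cases c)
        case (Inl c')
        have "(\<Sum>m\<in>UNIV. matrix_inv ?H $ l $ m / cone_t y ^ 2 * (2 * cone_t y * ?H $ j $ m)) / 2
              = (\<Sum>m\<in>UNIV. matrix_inv ?H $ l $ m * ?H $ m $ j) / cone_t y"
          using t hsym[OF u] by (simp add: sum_divide_distrib sum_distrib_left power2_eq_square field_simps)
        then show ?thesis using Inl `a = _` `b = _` t e2
          by (auto simp: christoffel_def gi sum_cone pd_gInrInr[OF y])
      next
        case (Inr k)
        have "(\<Sum>m\<in>UNIV. matrix_inv ?H $ l $ m / cone_t y ^ 2 *
               (cone_t y ^ 2 * pd j (\<lambda>u. h u $ k $ m) (cone_base y) + cone_t y ^ 2 * pd k (\<lambda>u. h u $ j $ m) (cone_base y)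
                - cone_t y ^ 2 * pd m (\<lambda>u. h u $ j $ k) (cone_base y))) / 2
           = (\<Sum>m\<in>UNIV. matrix_inv ?H $ l $ m *
               (pd j (\<lambda>u. h u $ k $ m) (cone_base y) + pd k (\<lambda>u. h u $ j $ m) (cone_base y)
                - pd m (\<lambda>u. h u $ j $ k) (cone_base y))) / 2"
          using t by (intro arg_cong[where f="\<lambda>x. x / 2"] sum.cong) (auto simp: field_simps)
        then show ?thesis using Inr `a = _` `b = _` t
          by (auto simp: christoffel_def gi sum_cone pd_gInrInr[OF y])
      qed
    qed
  qed
qed

end

lemma sum_delta_if[simp]:
  "(\<Sum>m\<in>UNIV. (if l = m then a else 0) * X m) = a * X l"
  "(\<Sum>m\<in>UNIV. X m * (if l = m then a else 0)) = X l * a"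
  "(\<Sum>m\<in>UNIV. (if m = l then a else 0) * X m) = a * X l"
  "(\<Sum>m\<in>UNIV. X m * (if m = l then a else 0)) = X l * a"
  for X :: "'n::finite \<Rightarrow> real"
  by (simp_all add: if_distrib[of "\<lambda>x. x * _"] if_distrib[of "\<lambda>x. _ * x"] sum.delta sum.delta' cong: if_cong)

context cone_setup begin

lemma pdchr:
  assumes "P \<in> cone_domain U"
  shows "pd a (\<lambda>y. christoffel (cone_metric h) y d b c) P = pd a (\<lambda>y. CF h d b c y) P"
  by (rule pd_local[OF oD assms]) (rule chr)

lemma pd_inv_t:
  assumes "P \<in> cone_domain U"
  shows "pd a (\<lambda>z. 1 / cone_t z) P = (case a of Inl _ \<Rightarrow> - 1 / cone_t P ^ 2 | Inr _ \<Rightarrow> 0)"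
proof -
  have t: "cone_t P > 0" using inD[OF assms] by auto
  have d: "(\<lambda>z. 1 / cone_t z) differentiable (at P)"
    using t by (auto intro!: differentiable_divide diff_t)
  have "pd a (\<lambda>z. cone_t z * (1 / cone_t z)) P = pd a (\<lambda>z. 1) P"
    by (rule pd_local[OF oD assms]) (auto dest: inD)
  then have "cone_t P * pd a (\<lambda>z. 1 / cone_t z) P + pd a cone_t P * (1 / cone_t P) = 0"
    using pd_mult[OF diff_t d, of a] by simp
  then show ?thesis using t by (cases a) (auto simp: pd_t field_simps power2_eq_square)
qed

definition dCF :: "unit+'n \<Rightarrow> unit+'n \<Rightarrow> unit+'n \<Rightarrow> unit+'n \<Rightarrow> real^(unit+'n) \<Rightarrow> real" where
"dCF d b c a P = (case d of
  Inl _ \<Rightarrow> (case (b,c) of (Inr j, Inr k) \<Rightarrow> (case a of Inl _ \<Rightarrow> - h (cone_base P) $ j $ k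
             | Inr i \<Rightarrow> - cone_t P * pd i (\<lambda>v. h v $ j $ k) (cone_base P)) | _ \<Rightarrow> 0)
| Inr l \<Rightarrow> (case (b,c) of
     (Inl _, Inr k) \<Rightarrow> (if l = k then (case a of Inl _ \<Rightarrow> - 1 / cone_t P ^ 2 | Inr _ \<Rightarrow> 0) else 0)
   | (Inr k, Inl _) \<Rightarrow> (if l = k then (case a of Inl _ \<Rightarrow> - 1 / cone_t P ^ 2 | Inr _ \<Rightarrow> 0) else 0)
   | (Inr j, Inr k) \<Rightarrow> (case a of Inl _ \<Rightarrow> 0 | Inr i \<Rightarrow> pd i (\<lambda>v. christoffel h v l j k) (cone_base P))
   | _ \<Rightarrow> 0))"

lemma pdCF:
  assumes P: "P \<in> cone_domain U"
  shows "pd a (\<lambda>y. CF h d b c y) P = dCF d b c a P"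
proof -
  have t: "cone_t P > 0" and u: "cone_base P \<in> U" using inD[OF P] by auto
  show ?thesis
  proof (cases d)
    case (Inl d')
    show ?thesis
    proof (cases "\<exists>j k. b = Inr j \<and> c = Inr k")
      case True
      then obtain j k where bc: "b = Inr j" "c = Inr k" by blast
      have dh: "(\<lambda>v. h v $ j $ k) differentiable (at (cone_base P))" using hdiff u by blast
      have "pd a (\<lambda>y. - (cone_t y * h (cone_base y) $ j $ k)) P
           = - (cone_t P * pd a (\<lambda>y. (\<lambda>v. h v $ j $ k) (cone_base y)) P + pd a cone_t P * h (cone_base P) $ j $ k)"
      proof -
        have m: "pd a (\<lambda>y. cone_t y * h (cone_base y) $ j $ k) P = cone_t P * pd a (\<lambda>y. h (cone_base y) $ j $ k) P + pd a cone_t P * h (cone_base P) $ j $ k"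
          using pd_mult[OF diff_t diff_base[OF dh], of a] by simp
        show ?thesis
          by (subst pd_minus) (auto intro!: differentiable_mult diff_t diff_base[OF dh, simplified] simp: m)
      qed
      then show ?thesis using Inl bc pd_base[OF dh, of a]
        by (cases a) (auto simp: dCF_def pd_t)
    next
      case False
      then have "CF h d b c y = 0" for y using Inl by (cases b; cases c) auto
      then show ?thesis using False Inl by (cases b; cases c) (auto simp: dCF_def)
    qed
  next
    case (Inr l)
    show ?thesis
    proof (cases b)
      case (Inl b')
      show ?thesis
      proof (cases c)
        case (Inl c') then show ?thesis using `b = _` Inr by (simp add: dCF_def)
      next
        case (Inr k)
        then show ?thesis using `b = _` `d = _` pd_inv_t[OF P, of a]
          by (cases a) (auto simp: dCF_def)
      qed
    next
      case (Inr j)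
      show ?thesis
      proof (cases c)
        case (Inl c')
        then show ?thesis using `b = _` `d = _` pd_inv_t[OF P, of a]
          by (cases a) (auto simp: dCF_def)
      next
        case (Inr k)
        have dg: "(\<lambda>v. christoffel h v l j k) differentiable (at (cone_base P))" using Gdiff u by blast
        show ?thesis using Inr `b = _` `d = _` pd_base[OF dg, of a]
          by (cases a) (auto simp: dCF_def)
      qed
    qed
  qed
qed

end

lemma if0_mult: "(if P then a else 0) * b = (if P then a * b else (0::real))"
  "b * (if P then a else 0) = (if P then b * a else (0::real))"
  "- (if P then a else 0) = (if P then - a else (0::real))"
  by auto

context cone_setup begin

lemma pd_hsym: "u \<in> U \<Longrightarrow> pd x (\<lambda>v. h v $ a $ b) u = pd x (\<lambda>v. h v $ b $ a) u"
  by (rule pd_local[OF oU]) (auto simp: hsym)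

lemma chr_sym: "u \<in> U \<Longrightarrow> christoffel h u l j k = christoffel h u l k j"
  unfolding christoffel_def by (simp add: pd_hsym[of u _ j k] hsym[of u j k] add.commute)

lemma lowG: assumes u: "u \<in> U"
  shows "(\<Sum>m\<in>UNIV. h u $ i $ m * christoffel h u m j k)
     = (pd j (\<lambda>v. h v $ k $ i) u + pd k (\<lambda>v. h v $ j $ i) u - pd i (\<lambda>v. h v $ j $ k) u) / 2"
proof -
  let ?H = "h u"
  have hi: "?H ** matrix_inv ?H = mat 1" using inv_props[OF hinvt[OF u]] by auto
  have e1: "(\<Sum>m\<in>UNIV. ?H $ i $ m * matrix_inv ?H $ m $ l) = (if i = l then 1 else 0)" for i l
    using arg_cong[OF hi, of "\<lambda>M. M $ i $ l"] by (simp add: matrix_matrix_mult_def mat1_entry)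
  define S where "S l = pd j (\<lambda>v. h v $ k $ l) u + pd k (\<lambda>v. h v $ j $ l) u - pd l (\<lambda>v. h v $ j $ k) u" for l
  have "(\<Sum>m\<in>UNIV. ?H $ i $ m * christoffel h u m j k) = (\<Sum>m\<in>UNIV. \<Sum>l\<in>UNIV. ?H $ i $ m * matrix_inv ?H $ m $ l * S l) / 2"
    unfolding christoffel_def S_def by (simp add: sum_divide_distrib sum_distrib_left mult.assoc)
  also have "\<dots> = (\<Sum>l\<in>UNIV. (\<Sum>m\<in>UNIV. ?H $ i $ m * matrix_inv ?H $ m $ l) * S l) / 2"
    by (subst sum.swap) (simp add: sum_distrib_right)
  also have "\<dots> = S i / 2" by (simp add: e1)
  finally show ?thesis by (simp add: S_def)
qed

lemma curv_expand:
  assumes P: "P \<in> cone_domain U"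
  shows "curv_comp (cone_metric h) P a b c d = dCF d b c a P - dCF d a c b P
     + (\<Sum>m\<in>UNIV. CF h d a m P * CF h m b c P - CF h d b m P * CF h m a c P)"
  unfolding curv_comp_def by (simp only: pdchr[OF P] chr[OF P] pdCF[OF P])

lemma curv_cone:
  assumes P: "P \<in> cone_domain U"
  shows "curv_comp (cone_metric h) P a b c d = (case (a,b,c,d) of
     (Inr i, Inr j, Inr k, Inr l) \<Rightarrow> curv_comp h (cone_base P) i j k l
         - (if l = i then h (cone_base P) $ j $ k else 0) + (if l = j then h (cone_base P) $ i $ k else 0)
   | _ \<Rightarrow> 0)"
proof -
  have t: "cone_t P > 0" and u: "cone_base P \<in> U" using inD[OF P] by auto
  note cs = chr_sym[OF u]
  have lg: "(\<Sum>m\<in>UNIV. c * h (cone_base P) $ i $ m * christoffel h (cone_base P) m j k) =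
     c * ((pd j (\<lambda>v. h v $ k $ i) (cone_base P) + pd k (\<lambda>v. h v $ j $ i) (cone_base P) - pd i (\<lambda>v. h v $ j $ k) (cone_base P)) / 2)" for c i j k
    using lowG[OF u, of i j k] by (simp add: sum_distrib_left[symmetric] mult.assoc)
  have ps: "pd x (\<lambda>v. h v $ i $ j) (cone_base P) = pd x (\<lambda>v. h v $ j $ i) (cone_base P)" for x i j
    using pd_hsym[OF u] .
  have comp: "cone_t P * pd j (\<lambda>v. h v $ i $ k) (cone_base P) - cone_t P * pd i (\<lambda>v. h v $ j $ k) (cone_base P)
     + (\<Sum>m\<in>UNIV. cone_t P * h (cone_base P) $ j $ m * christoffel h (cone_base P) m i k
         - cone_t P * h (cone_base P) $ i $ m * christoffel h (cone_base P) m j k) = 0" for i j k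
    by (simp add: sum_subtractf lg) (simp add: ps field_simps)
  have lg2: "(\<Sum>m\<in>UNIV. christoffel h (cone_base P) m j k * h (cone_base P) $ i $ m) =
     (pd j (\<lambda>v. h v $ k $ i) (cone_base P) + pd k (\<lambda>v. h v $ j $ i) (cone_base P) - pd i (\<lambda>v. h v $ j $ k) (cone_base P)) / 2" for i j k
    using lowG[OF u, of i j k] by (simp add: mult.commute)
  show ?thesis unfolding curv_expand[OF P]
    apply (cases a; cases b; cases c; cases d)
    using t apply (simp_all add: dCF_def sum_cone if0_mult sum.delta sum.delta' curv_comp_def cs power2_eq_square
       sum_subtractf lg comp)
    apply (simp_all add: hsym[OF u] ps algebra_simps)
    apply (simp add: sum_negf sum_distrib_left[symmetric] lg2 ps field_simps)
    done
qed

end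

lemma quad_sum:
  fixes p q :: "'n::finite \<Rightarrow> 'n \<Rightarrow> real"
  shows "(\<Sum>i\<in>UNIV. \<Sum>j\<in>UNIV. \<Sum>k\<in>UNIV. \<Sum>m\<in>UNIV. p j k * q i m)
       = (\<Sum>j\<in>UNIV. \<Sum>k\<in>UNIV. p j k) * (\<Sum>i\<in>UNIV. \<Sum>m\<in>UNIV. q i m)"
proof -
  have "(\<Sum>i\<in>UNIV. \<Sum>j\<in>UNIV. \<Sum>k\<in>UNIV. \<Sum>m\<in>UNIV. p j k * q i m)
      = (\<Sum>i\<in>UNIV. \<Sum>j\<in>UNIV. \<Sum>k\<in>UNIV. p j k * (\<Sum>m\<in>UNIV. q i m))"
    by (simp add: sum_distrib_left)
  also have "\<dots> = (\<Sum>i\<in>UNIV. (\<Sum>j\<in>UNIV. \<Sum>k\<in>UNIV. p j k) * (\<Sum>m\<in>UNIV. q i m))"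
    by (simp add: sum_distrib_right)
  also have "\<dots> = (\<Sum>j\<in>UNIV. \<Sum>k\<in>UNIV. p j k) * (\<Sum>i\<in>UNIV. \<Sum>m\<in>UNIV. q i m)"
    by (simp add: sum_distrib_left)
  finally show ?thesis .
qed

definition Bh :: "(real^'n \<Rightarrow> real^'n^'n) \<Rightarrow> real^(unit+'n::finite) \<Rightarrow> real^(unit+'n) \<Rightarrow> real^(unit+'n) \<Rightarrow> real" where
  "Bh h P X Y = bil (h (cone_base P)) (cone_base X) (cone_base Y)"

lemma bil_sum: "bil A x y = (\<Sum>j\<in>UNIV. \<Sum>k\<in>UNIV. x $ j * A $ j $ k * y $ k)"
  by (simp add: bil_def inner_vec_def matrix_vector_mult_def sum_distrib_left mult.assoc)

lemma axis_nth: "axis i (1::real) $ j = (if j = i then 1 else 0)"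
  by (simp add: axis_def)

lemma bil_axis[simp]: "bil A (axis i 1) (axis j 1) = A $ i $ (j::'n::finite)"
  by (simp add: bil_sum axis_nth if0_mult sum.delta sum.delta' cong: if_cong)

lemma sum_if_const: "(\<Sum>x\<in>A. if P then f x else 0) = (if P then (\<Sum>x\<in>A. f x) else (0::real))"
  by simp

lemma curv4_axis: "curv4 g x (axis i 1) (axis j 1) (axis k 1) (axis m 1)
   = (\<Sum>l\<in>UNIV. curv_comp g x i j k l * g x $ l $ m)"
  by (simp add: curv4_def axis_nth if0_mult sum_if_const sum.delta sum.delta' cong: if_cong)

locale cone_cc = cone_setup U h for U :: "(real^'n::finite) set" and h +
  fixes k' :: real
  assumes cc: "const_sect_curv U h k'"
begin

lemma low_h: "u \<in> U \<Longrightarrow> (\<Sum>l\<in>UNIV. curv_comp h u i j k l * h u $ l $ m)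
   = k' * (h u $ j $ k * h u $ i $ m - h u $ i $ k * h u $ j $ m)"
  using cc unfolding const_sect_curv_def curv4_axis[symmetric] by simp

lemma low_cone:
  assumes P: "P \<in> cone_domain U"
  shows "(\<Sum>d\<in>UNIV. curv_comp (cone_metric h) P a b c d * cone_metric h P $ d $ e) =
    (case (a,b,c,e) of (Inr i, Inr j, Inr k, Inr m) \<Rightarrow>
       cone_t P ^ 2 * (k' - 1) * (h (cone_base P) $ j $ k * h (cone_base P) $ i $ m
           - h (cone_base P) $ i $ k * h (cone_base P) $ j $ m)
     | _ \<Rightarrow> 0)"
proof -
  have u: "cone_base P \<in> U" using inD[OF P] by auto
  note lh = low_h[OF u]
  have lh2: "(\<Sum>l\<in>UNIV. curv_comp h (cone_base P) i j k l * (c2 * h (cone_base P) $ l $ m))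
      = c2 * (k' * (h (cone_base P) $ j $ k * h (cone_base P) $ i $ m - h (cone_base P) $ i $ k * h (cone_base P) $ j $ m))" for c2 i j k m
  proof -
    have "(\<Sum>l\<in>UNIV. curv_comp h (cone_base P) i j k l * (c2 * h (cone_base P) $ l $ m))
       = c2 * (\<Sum>l\<in>UNIV. curv_comp h (cone_base P) i j k l * h (cone_base P) $ l $ m)"
      by (simp add: sum_distrib_left algebra_simps)
    then show ?thesis using lh[of i j k m] by simp
  qed
  show ?thesis
    apply (cases a; cases b; cases c; cases e)
    apply (simp_all add: sum_cone curv_cone[OF P])
    apply (simp add: ring_distribs sum.distrib sum_subtractf if0_mult sum.delta' sum.delta lh2)
    done
qed

lemma curv4_cone:
  assumes P: "P \<in> cone_domain U"
  shows "curv4 (cone_metric h) P X Y Z W =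
     cone_t P ^ 2 * (k' - 1) * (Bh h P Y Z * Bh h P X W - Bh h P X Z * Bh h P Y W)"
proof -
  let ?L = "\<lambda>a b c e. (\<Sum>d\<in>UNIV. curv_comp (cone_metric h) P a b c d * cone_metric h P $ d $ e)"
  let ?H = "h (cone_base P)"
  let ?c = "cone_t P ^ 2 * (k' - 1)"
  have "curv4 (cone_metric h) P X Y Z W = (\<Sum>a\<in>UNIV. \<Sum>b\<in>UNIV. \<Sum>c\<in>UNIV. \<Sum>e\<in>UNIV.
          X $ a * Y $ b * Z $ c * W $ e * ?L a b c e)"
  proof -
    have inner: "(\<Sum>l\<in>UNIV. \<Sum>m\<in>UNIV. X $ a * Y $ b * Z $ c * W $ m * curv_comp (cone_metric h) P a b c l * cone_metric h P $ l $ m)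
       = (\<Sum>e\<in>UNIV. X $ a * Y $ b * Z $ c * W $ e * ?L a b c e)"
      for a b c by (subst sum.swap) (simp add: sum_distrib_left algebra_simps)
    show ?thesis unfolding curv4_def by (simp only: inner)
  qed
  also have "\<dots> = (\<Sum>i\<in>UNIV. \<Sum>j\<in>UNIV. \<Sum>k\<in>UNIV. \<Sum>m\<in>UNIV.
          X $ Inr i * Y $ Inr j * Z $ Inr k * W $ Inr m * (?c * (?H $ j $ k * ?H $ i $ m - ?H $ i $ k * ?H $ j $ m)))"
    by (simp add: low_cone[OF P] sum_cone)
  also have "\<dots> = ?c * ((\<Sum>i\<in>UNIV. \<Sum>j\<in>UNIV. \<Sum>k\<in>UNIV. \<Sum>m\<in>UNIV.
          (Y $ Inr j * ?H $ j $ k * Z $ Inr k) * (X $ Inr i * ?H $ i $ m * W $ Inr m))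
        - (\<Sum>i\<in>UNIV. \<Sum>j\<in>UNIV. \<Sum>k\<in>UNIV. \<Sum>m\<in>UNIV.
          (X $ Inr i * ?H $ i $ k * Z $ Inr k) * (Y $ Inr j * ?H $ j $ m * W $ Inr m)))"
    by (simp add: sum_distrib_left sum_subtractf[symmetric] algebra_simps)
  also have "\<dots> = ?c * (Bh h P Y Z * Bh h P X W - Bh h P X Z * Bh h P Y W)"
  proof -
    have s2: "(\<Sum>i\<in>UNIV. \<Sum>j\<in>UNIV. \<Sum>k\<in>UNIV. \<Sum>m\<in>UNIV.
          (X $ Inr i * ?H $ i $ k * Z $ Inr k) * (Y $ Inr j * ?H $ j $ m * W $ Inr m))
        = (\<Sum>j\<in>UNIV. \<Sum>i\<in>UNIV. \<Sum>k\<in>UNIV. \<Sum>m\<in>UNIV.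
          (X $ Inr i * ?H $ i $ k * Z $ Inr k) * (Y $ Inr j * ?H $ j $ m * W $ Inr m))"
      by (rule sum.swap)
    show ?thesis
      unfolding s2 quad_sum Bh_def bil_sum by (simp add: cone_base_def)
  qed
  finally show ?thesis .
qed

end

lemma bil_axis_left: "bil H (axis i 1) z = (H *v z) $ i"
  by (simp add: bil_def inner_vec_def axis_nth if0_mult sum.delta sum.delta' cong: if_cong)

lemma inner_axis_right: "x \<bullet> axis j (1::real) = x $ j"
  by (simp add: inner_vec_def axis_nth if0_mult sum.delta sum.delta' cong: if_cong)

lemma bil_right_mat: "bil H y (A *v axis j 1) = ((y v* H) v* A) $ j"
  by (simp add: bil_def dot_lmul_matrix[symmetric] inner_axis_right)

lemma sum_M: "(\<Sum>i\<in>UNIV. \<Sum>j\<in>UNIV. M $ i $ j * (p $ i * q $ j)) = p \<bullet> (M *v q)"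
  for M :: "real^'n::finite^'n"
  by (simp add: inner_vec_def matrix_vector_mult_def sum_distrib_left algebra_simps)

lemma T2:
  fixes H M A :: "real^'n::finite^'n"
  assumes "M ** H = mat 1" "transpose M = M"
  shows "(\<Sum>i\<in>UNIV. \<Sum>j\<in>UNIV. M $ i $ j * (bil H (axis i 1) z * bil H y (A *v axis j 1))) = bil H y (A *v z)"
proof -
  have "(\<Sum>i\<in>UNIV. \<Sum>j\<in>UNIV. M $ i $ j * (bil H (axis i 1) z * bil H y (A *v axis j 1)))
     = (H *v z) \<bullet> (M *v ((y v* H) v* A))"
    unfolding bil_axis_left bil_right_mat by (rule sum_M)
  also have "\<dots> = ((H *v z) v* M) \<bullet> ((y v* H) v* A)" by (simp add: dot_lmul_matrix)
  also have "(H *v z) v* M = z"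
  proof -
    have "(H *v z) v* M = (H *v z) v* transpose (transpose M)" by simp
    also have "\<dots> = transpose M *v (H *v z)" by (rule vector_transpose_matrix)
    also have "\<dots> = z" using assms by (simp add: matrix_vector_mul_assoc)
    finally show ?thesis .
  qed
  also have "z \<bullet> ((y v* H) v* A) = ((y v* H) v* A) \<bullet> z" by (rule inner_commute)
  also have "\<dots> = bil H y (A *v z)" by (simp add: bil_def dot_lmul_matrix)
  finally show ?thesis .
qed

lemma T3:
  fixes H M :: "real^'n::finite^'n"
  assumes "M ** H = mat 1" "transpose H = H"
  shows "(\<Sum>i\<in>UNIV. \<Sum>j\<in>UNIV. M $ i $ j * bil H (axis i 1) (axis j 1)) = real CARD('n)"
proof -
  have hs: "H $ i $ j = H $ j $ i" for i j using assms(2) by (metis transpose_def vec_lambda_beta)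
  have "(\<Sum>j\<in>UNIV. M $ i $ j * H $ j $ i) = 1" for i
    using arg_cong[OF assms(1), of "\<lambda>X. X $ i $ i"] by (simp add: matrix_matrix_mult_def mat_def)
  then show ?thesis by (simp add: hs)
qed

lemma T1:
  fixes H M A :: "real^'n::finite^'n"
  assumes "M ** H = mat 1" "transpose M = M"
  shows "(\<Sum>i\<in>UNIV. \<Sum>j\<in>UNIV. M $ i $ j * bil H (axis i 1) (A *v axis j 1)) = (\<Sum>j\<in>UNIV. A $ j $ j)"
proof -
  have ms: "M $ i $ j = M $ j $ i" for i j using assms(2) by (metis transpose_def vec_lambda_beta)
  have e: "bil H (axis i 1) (A *v axis j 1) = (H ** A) $ i $ j" for i j
    by (simp add: bil_axis_left matrix_vector_mul_assoc matrix_vector_mult_def axis_nth if0_mult sum.delta sum.delta' matrix_matrix_mult_def cong: if_cong)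
  have "(\<Sum>i\<in>UNIV. \<Sum>j\<in>UNIV. M $ i $ j * bil H (axis i 1) (A *v axis j 1)) = (\<Sum>j\<in>UNIV. \<Sum>i\<in>UNIV. M $ j $ i * (H ** A) $ i $ j)"
    by (subst sum.swap) (simp add: e ms)
  also have "\<dots> = (\<Sum>j\<in>UNIV. ((M ** H) ** A) $ j $ j)"
    by (simp add: matrix_mul_assoc[symmetric]) (simp add: matrix_matrix_mult_def)
  finally show ?thesis using assms by simp
qed

lemma inv_sym:
  fixes H :: "real^'n::finite^'n"
  assumes "invertible H" "transpose H = H"
  shows "transpose (matrix_inv H) = matrix_inv H" "matrix_inv H ** H = mat 1"
proof -
  have i: "H ** matrix_inv H = mat 1" "matrix_inv H ** H = mat 1" using inv_props[OF assms(1)] by auto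
  have "H ** transpose (matrix_inv H) = mat 1"
    using arg_cong[OF i(2), of transpose] by (simp add: matrix_transpose_mul assms(2))
  moreover have "transpose (matrix_inv H) ** H = mat 1"
    using arg_cong[OF i(1), of transpose] by (simp add: matrix_transpose_mul assms(2))
  ultimately have "matrix_inv H = transpose (matrix_inv H)" by (rule matrix_inv_unique)
  then show "transpose (matrix_inv H) = matrix_inv H" by simp
  show "matrix_inv H ** H = mat 1" by (rule i(2))
qed

lemma base_phi: "cone_base (cone_phi J P *v V) = J (cone_base P) *v cone_base V"
  by (simp add: vec_eq_iff cone_base_def matrix_vector_mult_def sum_cone)

lemma bil_zero_left[simp]: "bil H 0 z = 0" by (simp add: bil_def)
lemma bil_zero_right[simp]: "bil H z 0 = 0" by (simp add: bil_def)

context cone_cc begin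

lemma rho_star_cone:
  assumes P: "P \<in> cone_domain U"
  shows "rho_star (cone_metric h) (cone_phi J) P Y Z =
    (cone_t P ^ 2 * (k' - 1) / cone_t P ^ 2) *
     (Bh h P Y Z * (\<Sum>i\<in>UNIV. \<Sum>j\<in>UNIV. matrix_inv (h (cone_base P)) $ i $ j *
          bil (h (cone_base P)) (axis i 1) (J (cone_base P) *v axis j 1))
      - bil (h (cone_base P)) (cone_base Y) (J (cone_base P) *v cone_base Z))"
proof -
  have t: "cone_t P > 0" and u: "cone_base P \<in> U" using inD[OF P] by auto
  let ?H = "h (cone_base P)" let ?M = "matrix_inv ?H" let ?J = "J (cone_base P)"
  have hs: "transpose ?H = ?H" using hsym[OF u] by (simp add: transpose_def vec_eq_iff)
  note iv = inv_sym[OF hinvt[OF u] hs]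
  let ?c = "cone_t P ^ 2 * (k' - 1)"
  have gi: "matrix_inv (cone_metric h P) = Ginv h P" using ginv_formula[of P h] t hinvt[OF u] by auto
  have "rho_star (cone_metric h) (cone_phi J) P Y Z =
     (\<Sum>i\<in>UNIV. \<Sum>j\<in>UNIV. ?M $ i $ j / cone_t P ^ 2 * (?c * (Bh h P Y Z * bil ?H (axis i 1) (?J *v axis j 1)
        - bil ?H (axis i 1) (cone_base Z) * bil ?H (cone_base Y) (?J *v axis j 1))))"
    unfolding rho_star_def gi using t
    by (simp add: sum_cone curv4_cone[OF P] Bh_def base_phi)
  also have "\<dots> = (?c / cone_t P ^ 2) * (Bh h P Y Z * (\<Sum>i\<in>UNIV. \<Sum>j\<in>UNIV. ?M $ i $ j * bil ?H (axis i 1) (?J *v axis j 1))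
     - (\<Sum>i\<in>UNIV. \<Sum>j\<in>UNIV. ?M $ i $ j * (bil ?H (axis i 1) (cone_base Z) * bil ?H (cone_base Y) (?J *v axis j 1))))"
  proof -
    have pt: "?M $ i $ j / cone_t P ^ 2 * (?c * (Bh h P Y Z * a - b * d)) =
       (?c / cone_t P ^ 2) * (Bh h P Y Z * (?M $ i $ j * a)) - (?c / cone_t P ^ 2) * (?M $ i $ j * (b * d))" for i j a b d
      using t by (simp add: field_simps)
    show ?thesis by (simp only: pt sum_subtractf sum_distrib_left[symmetric]) (simp only: right_diff_distrib)
  qed
  also have "\<dots> = (?c / cone_t P ^ 2) * (Bh h P Y Z * (\<Sum>i\<in>UNIV. \<Sum>j\<in>UNIV. ?M $ i $ j * bil ?H (axis i 1) (?J *v axis j 1))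
     - bil ?H (cone_base Y) (?J *v cone_base Z))"
    by (simp only: T2[OF iv(2) iv(1)])
  finally show ?thesis .
qed

end

lemma T2':
  fixes H M :: "real^'n::finite^'n"
  assumes "M ** H = mat 1" "transpose M = M"
  shows "(\<Sum>i\<in>UNIV. \<Sum>j\<in>UNIV. M $ i $ j * (bil H (axis i 1) z * bil H y (axis j 1))) = bil H y z"
  using T2[OF assms, of z y "mat 1"] by simp

lemma sum2_lin:
  fixes f a b :: "'a \<Rightarrow> 'b \<Rightarrow> real"
  shows "(\<Sum>i\<in>A. \<Sum>j\<in>B. f i j / T * (K * (a i j * s - b i j))) =
    K / T * (s * (\<Sum>i\<in>A. \<Sum>j\<in>B. f i j * a i j) - (\<Sum>i\<in>A. \<Sum>j\<in>B. f i j * b i j))"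
proof -
  have pt: "f i j / T * (K * (a i j * s - b i j)) = K / T * (s * (f i j * a i j)) - K / T * (f i j * b i j)" for i j
    by (simp add: divide_inverse algebra_simps)
  show ?thesis by (simp only: pt sum_subtractf sum_distrib_left[symmetric]) (simp only: right_diff_distrib)
qed

lemma sum2_lin_plus:
  fixes f a b :: "'a \<Rightarrow> 'b \<Rightarrow> real"
  shows "(\<Sum>i\<in>A. \<Sum>j\<in>B. f i j / T * (K * (a i j * s + b i j))) =
    K / T * (s * (\<Sum>i\<in>A. \<Sum>j\<in>B. f i j * a i j) + (\<Sum>i\<in>A. \<Sum>j\<in>B. f i j * b i j))"
proof -
  have pt: "f i j / T * (K * (a i j * s + b i j)) = K / T * (s * (f i j * a i j)) + K / T * (f i j * b i j)" for i j
    by (simp add: divide_inverse algebra_simps)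
  show ?thesis by (simp only: pt sum.distrib sum_distrib_left[symmetric]) (simp only: distrib_left)
qed

context cone_cc begin

lemma rho_cone:
  assumes P: "P \<in> cone_domain U"
  shows "rho (cone_metric h) P Y Z =
    (cone_t P ^ 2 * (k' - 1) / cone_t P ^ 2) * (Bh h P Y Z * real CARD('n) - Bh h P Y Z)"
proof -
  have t: "cone_t P > 0" and u: "cone_base P \<in> U" using inD[OF P] by auto
  let ?H = "h (cone_base P)" let ?M = "matrix_inv ?H"
  have hs: "transpose ?H = ?H" using hsym[OF u] by (simp add: transpose_def vec_eq_iff)
  note iv = inv_sym[OF hinvt[OF u] hs]
  let ?c = "cone_t P ^ 2 * (k' - 1)"
  have gi: "matrix_inv (cone_metric h P) = Ginv h P" using ginv_formula[of P h] t hinvt[OF u] by auto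
  have "rho (cone_metric h) P Y Z =
     (\<Sum>i\<in>UNIV. \<Sum>j\<in>UNIV. ?M $ i $ j / cone_t P ^ 2 * (?c * (Bh h P Y Z * bil ?H (axis i 1) (axis j 1)
        - bil ?H (axis i 1) (cone_base Z) * bil ?H (cone_base Y) (axis j 1))))"
    unfolding rho_def gi using t
    by (simp add: sum_cone curv4_cone[OF P] Bh_def)
  also have "\<dots> = (?c / cone_t P ^ 2) * (Bh h P Y Z * (\<Sum>i\<in>UNIV. \<Sum>j\<in>UNIV. ?M $ i $ j * bil ?H (axis i 1) (axis j 1))
     - (\<Sum>i\<in>UNIV. \<Sum>j\<in>UNIV. ?M $ i $ j * (bil ?H (axis i 1) (cone_base Z) * bil ?H (cone_base Y) (axis j 1))))"
  proof -
    have pt: "?M $ i $ j / cone_t P ^ 2 * (?c * (Bh h P Y Z * a - b * d)) =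
       (?c / cone_t P ^ 2) * (Bh h P Y Z * (?M $ i $ j * a)) - (?c / cone_t P ^ 2) * (?M $ i $ j * (b * d))" for i j a b d
      using t by (simp add: field_simps)
    show ?thesis by (simp only: pt sum_subtractf sum_distrib_left[symmetric]) (simp only: right_diff_distrib)
  qed
  also have "\<dots> = (?c / cone_t P ^ 2) * (Bh h P Y Z * real CARD('n) - Bh h P Y Z)"
    by (simp only: T2'[OF iv(2) iv(1)] T3[OF iv(2) hs] Bh_def)
  finally show ?thesis .
qed

definition trJ :: "(real^'n \<Rightarrow> real^'n^'n) \<Rightarrow> real^(unit+'n) \<Rightarrow> real" where
  "trJ J P = (\<Sum>i\<in>UNIV. \<Sum>j\<in>UNIV. matrix_inv (h (cone_base P)) $ i $ j *
          bil (h (cone_base P)) (axis i 1) (J (cone_base P) *v axis j 1))"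

lemma Ginv_sum:
  "(\<Sum>a\<in>UNIV. \<Sum>b\<in>UNIV. Ginv h P $ a $ b * f a b) = f (Inl ()) (Inl ()) +
      (\<Sum>i\<in>UNIV. \<Sum>j\<in>UNIV. matrix_inv (h (cone_base P)) $ i $ j / cone_t P ^ 2 * f (Inr i) (Inr j))"
  by (simp add: sum_cone)

lemma tau_cone:
  assumes P: "P \<in> cone_domain U"
  shows "tau (cone_metric h) P = (k' - 1) / cone_t P ^ 2 * (real CARD('n) - 1) * real CARD('n)"
proof -
  have t: "cone_t P > 0" and u: "cone_base P \<in> U" using inD[OF P] by auto
  let ?H = "h (cone_base P)" let ?M = "matrix_inv ?H"
  have hs: "transpose ?H = ?H" using hsym[OF u] by (simp add: transpose_def vec_eq_iff)
  note iv = inv_sym[OF hinvt[OF u] hs]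
  have gi: "matrix_inv (cone_metric h P) = Ginv h P" using ginv_formula[of P h] t hinvt[OF u] by auto
  have "tau (cone_metric h) P = (\<Sum>i\<in>UNIV. \<Sum>j\<in>UNIV. ?M $ i $ j / cone_t P ^ 2 *
       ((k' - 1) * (bil ?H (axis i 1) (axis j 1) * real CARD('n) - bil ?H (axis i 1) (axis j 1))))"
    unfolding tau_def gi Ginv_sum using t by (simp add: rho_cone[OF P] Bh_def)
  also have "\<dots> = (k' - 1) / cone_t P ^ 2 * (real CARD('n) * (\<Sum>i\<in>UNIV. \<Sum>j\<in>UNIV. ?M $ i $ j * bil ?H (axis i 1) (axis j 1))
     - (\<Sum>i\<in>UNIV. \<Sum>j\<in>UNIV. ?M $ i $ j * bil ?H (axis i 1) (axis j 1)))"
    by (rule sum2_lin)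
  finally have e: "tau (cone_metric h) P = (k' - 1) / cone_t P ^ 2 * (real CARD('n) * real CARD('n) - real CARD('n))"
    by (simp only: T3[OF iv(2) hs])
  show ?thesis unfolding e by (simp add: divide_inverse algebra_simps)
qed

lemma tau_star_cone:
  assumes P: "P \<in> cone_domain U"
  shows "tau_star (cone_metric h) (cone_phi J) P = (k' - 1) / cone_t P ^ 2 * (real CARD('n) - 1) * trJ J P"
proof -
  have t: "cone_t P > 0" and u: "cone_base P \<in> U" using inD[OF P] by auto
  let ?H = "h (cone_base P)" let ?M = "matrix_inv ?H" let ?J = "J (cone_base P)"
  have hs: "transpose ?H = ?H" using hsym[OF u] by (simp add: transpose_def vec_eq_iff)
  note iv = inv_sym[OF hinvt[OF u] hs]
  have gi: "matrix_inv (cone_metric h P) = Ginv h P" using ginv_formula[of P h] t hinvt[OF u] by auto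
  have "tau_star (cone_metric h) (cone_phi J) P = (\<Sum>i\<in>UNIV. \<Sum>j\<in>UNIV. ?M $ i $ j / cone_t P ^ 2 *
       ((k' - 1) * (bil ?H (axis i 1) (axis j 1) * trJ J P - bil ?H (axis i 1) (?J *v axis j 1))))"
    unfolding tau_star_def gi Ginv_sum using t by (simp add: rho_star_cone[OF P] Bh_def trJ_def)
  also have "\<dots> = (k' - 1) / cone_t P ^ 2 * (trJ J P * (\<Sum>i\<in>UNIV. \<Sum>j\<in>UNIV. ?M $ i $ j * bil ?H (axis i 1) (axis j 1))
      - (\<Sum>i\<in>UNIV. \<Sum>j\<in>UNIV. ?M $ i $ j * bil ?H (axis i 1) (?J *v axis j 1)))"
    by (rule sum2_lin)
  also have "\<dots> = (k' - 1) / cone_t P ^ 2 * (trJ J P * real CARD('n) - trJ J P)"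
    by (simp only: T3[OF iv(2) hs] trJ_def)
  finally have e: "tau_star (cone_metric h) (cone_phi J) P = (k' - 1) / cone_t P ^ 2 * (trJ J P * real CARD('n) - trJ J P)" .
  show ?thesis unfolding e by (simp add: divide_inverse algebra_simps)
qed

lemma tau_star_star_cone:
  assumes P: "P \<in> cone_domain U" and JJ: "J (cone_base P) ** J (cone_base P) = - mat 1"
  shows "tau_star_star (cone_metric h) (cone_phi J) P = (k' - 1) / cone_t P ^ 2 * (trJ J P * trJ J P + real CARD('n))"
proof -
  have t: "cone_t P > 0" and u: "cone_base P \<in> U" using inD[OF P] by auto
  let ?H = "h (cone_base P)" let ?M = "matrix_inv ?H" let ?J = "J (cone_base P)"
  have hs: "transpose ?H = ?H" using hsym[OF u] by (simp add: transpose_def vec_eq_iff)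
  note iv = inv_sym[OF hinvt[OF u] hs]
  have gi: "matrix_inv (cone_metric h P) = Ginv h P" using ginv_formula[of P h] t hinvt[OF u] by auto
  have neg: "(- mat 1) *v x = - (mat 1 *v x)" for x :: "real^'n" by (simp add: vec_eq_iff matrix_vector_mult_def sum_negf)
  have jj: "?J *v (?J *v x) = - x" for x using JJ by (simp add: matrix_vector_mul_assoc neg)
  have bm: "bil ?H x (- y) = - bil ?H x y" for x y
    by (simp add: bil_def inner_vec_def matrix_vector_mult_def sum_negf)
  have "tau_star_star (cone_metric h) (cone_phi J) P = (\<Sum>i\<in>UNIV. \<Sum>j\<in>UNIV. ?M $ i $ j / cone_t P ^ 2 *
       ((k' - 1) * (bil ?H (axis i 1) (?J *v axis j 1) * trJ J P + bil ?H (axis i 1) (axis j 1))))"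
    unfolding tau_star_star_def gi Ginv_sum using t by (simp add: rho_star_cone[OF P] Bh_def trJ_def base_phi jj bm)
  also have "\<dots> = (k' - 1) / cone_t P ^ 2 * (trJ J P * (\<Sum>i\<in>UNIV. \<Sum>j\<in>UNIV. ?M $ i $ j * bil ?H (axis i 1) (?J *v axis j 1))
      + (\<Sum>i\<in>UNIV. \<Sum>j\<in>UNIV. ?M $ i $ j * bil ?H (axis i 1) (axis j 1)))"
    by (rule sum2_lin_plus)
  also have "\<dots> = (k' - 1) / cone_t P ^ 2 * (trJ J P * trJ J P + real CARD('n))"
    by (simp only: T3[OF iv(2) hs] trJ_def)
  finally show ?thesis .
qed

end

lemma bil_scale_left: "bil H (c *\<^sub>R x) y = c * bil H x y" by (simp add: bil_def)
lemma bil_scale_right: "bil H x (c *\<^sub>R y) = c * bil H x y" by (simp add: bil_def matrix_vector_mult_scaleR)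

lemma gram_zero:
  fixes x y :: "real^'n::finite"
  assumes "a *\<^sub>R x + b *\<^sub>R y = 0" "a \<noteq> 0 \<or> b \<noteq> 0"
  shows "bil H y y * bil H x x - bil H x y * bil H y x = 0"
proof (cases "a = 0")
  case True
  then have "y = 0" using assms by auto
  then show ?thesis by simp
next
  case False
  have ax: "a *\<^sub>R x = - (b *\<^sub>R y)" using assms(1) by (simp add: eq_neg_iff_add_eq_0)
  have "x = inverse a *\<^sub>R (a *\<^sub>R x)" using False by simp
  also have "\<dots> = (- b / a) *\<^sub>R y" unfolding ax by (simp add: divide_inverse mult.commute)
  finally have xe: "x = (- b / a) *\<^sub>R y" .
  show ?thesis unfolding xe by (simp only: bil_scale_left bil_scale_right) (simp add: algebra_simps)
qed

lemma xi_span: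
  fixes X Y :: "real^(unit+'n::finite)"
  assumes "cone_xi \<in> span {X, Y}"
  shows "\<exists>a b. a *\<^sub>R cone_base X + b *\<^sub>R cone_base Y = 0 \<and> (a \<noteq> 0 \<or> b \<noteq> 0)"
proof -
  obtain a where "cone_xi - a *\<^sub>R X \<in> span {Y}" using assms span_breakdown_eq by blast
  then obtain b where e: "cone_xi - a *\<^sub>R X = b *\<^sub>R Y" using span_singleton by auto
  then have e2: "cone_xi = a *\<^sub>R X + b *\<^sub>R Y" by (simp add: algebra_simps)
  have "cone_base cone_xi = a *\<^sub>R cone_base X + b *\<^sub>R cone_base Y"
    unfolding e2 by (simp add: cone_base_def vec_eq_iff)
  moreover have "cone_base (cone_xi :: real^(unit+'n)) = 0" by (simp add: cone_xi_def)
  moreover have "cone_t (cone_xi :: real^(unit+'n)) = a * cone_t X + b * cone_t Y"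
    unfolding e2 by (simp add: cone_t_def)
  moreover have "cone_t (cone_xi :: real^(unit+'n)) = 1" by (simp add: cone_xi_def)
  ultimately show ?thesis by (metis mult_zero_left add_0 zero_neq_one)
qed

context cone_cc begin

lemma sect_zero:
  assumes P: "P \<in> cone_domain U" and xi: "cone_xi \<in> span {X, Y}"
  shows "curv4 (cone_metric h) P X Y Y X = 0"
proof -
  obtain a b where "a *\<^sub>R cone_base X + b *\<^sub>R cone_base Y = 0" "a \<noteq> 0 \<or> b \<noteq> 0"
    using xi_span[OF xi] by blast
  from gram_zero[OF this, of "h (cone_base P)"] show ?thesis
    unfolding curv4_cone[OF P] Bh_def by simp
qed

end

lemma trace2:
  fixes J :: "real^2^2"
  assumes "J ** J = - mat 1"
  shows "(\<Sum>j\<in>UNIV. J $ j $ j) = 0"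
proof -
  have e: "(J ** J) $ i $ k = - mat 1 $ i $ k" for i k using assms by simp
  have e11: "J$1$1 * J$1$1 + J$1$2 * J$2$1 = -1" using e[of 1 1] by (simp add: matrix_matrix_mult_def sum_2 mat_def)
  have e12: "J$1$1 * J$1$2 + J$1$2 * J$2$2 = 0" using e[of 1 2] by (simp add: matrix_matrix_mult_def sum_2 mat_def)
  have e21: "J$2$1 * J$1$1 + J$2$2 * J$2$1 = 0" using e[of 2 1] by (simp add: matrix_matrix_mult_def sum_2 mat_def)
  have "J$1$1 + J$2$2 = 0"
  proof (rule ccontr)
    assume s: "J$1$1 + J$2$2 \<noteq> 0"
    have "J$1$2 * (J$1$1 + J$2$2) = 0" using e12 by (simp add: algebra_simps)
    then have "J$1$2 = 0" using s by simp
    then have "J$1$1 * J$1$1 = -1" using e11 by simp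
    moreover have "J$1$1 * J$1$1 \<ge> 0" by simp
    ultimately show False by linarith
  qed
  then show ?thesis by (simp add: sum_2)
qed


definition inv2 :: "real^2^2 \<Rightarrow> real^2^2" where
  "inv2 A = (\<chi> i j. (if i = 1 then (if j = 1 then A$2$2 else - A$1$2)
      else (if j = 1 then - A$2$1 else A$1$1)) / (A$1$1 * A$2$2 - A$1$2 * A$2$1))"

lemma inv2_ok:
  fixes A :: "real^2^2"
  assumes "invertible A"
  shows "matrix_inv A = inv2 A" "A$1$1 * A$2$2 - A$1$2 * A$2$1 \<noteq> 0"
proof -
  show d: "A$1$1 * A$2$2 - A$1$2 * A$2$1 \<noteq> 0"
    using assms invertible_det_nz det_2 by metis
  have sq: "A$1$1 * (A$1$1 * (A$2$2 * A$2$2)) + A$1$2 * (A$1$2 * (A$2$1 * A$2$1)) \<noteq> 2 * (A$1$1 * (A$1$2 * (A$2$1 * A$2$2)))"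
  proof
    assume "A$1$1 * (A$1$1 * (A$2$2 * A$2$2)) + A$1$2 * (A$1$2 * (A$2$1 * A$2$1)) = 2 * (A$1$1 * (A$1$2 * (A$2$1 * A$2$2)))"
    then have "(A$1$1 * A$2$2 - A$1$2 * A$2$1) * (A$1$1 * A$2$2 - A$1$2 * A$2$1) = 0"
      by (simp add: algebra_simps)
    then show False using d by simp
  qed
  show "matrix_inv A = inv2 A"
  proof (rule matrix_inv_unique)
    show "A ** inv2 A = mat 1" using d
      by (simp add: vec_eq_iff forall_2 matrix_matrix_mult_def sum_2 inv2_def mat_def field_simps sq)
    show "inv2 A ** A = mat 1" using d
      by (simp add: vec_eq_iff forall_2 matrix_matrix_mult_def sum_2 inv2_def mat_def field_simps sq)
  qed
qed

lemma differentiable_local: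
  assumes "open S" "x \<in> S" "\<And>y. y \<in> S \<Longrightarrow> f y = g y" "g differentiable (at x)"
  shows "f differentiable (at x)"
proof -
  obtain D where "(g has_derivative D) (at x)" using assms(4) unfolding differentiable_def by blast
  then have "(f has_derivative D) (at x)"
    by (rule has_derivative_transform_within_open[OF _ assms(1,2)]) (simp add: assms(3))
  then show ?thesis unfolding differentiable_def by blast
qed

lemma Gdiff2:
  fixes U :: "(real^2) set" and h :: "real^2 \<Rightarrow> real^2^2"
  assumes oU: "open U" and sm: "\<And>i j. smooth_fun U (\<lambda>x. h x $ i $ j)"
    and inv: "\<And>x. x \<in> U \<Longrightarrow> invertible (h x)" and x: "x \<in> U"
  shows "(\<lambda>y. christoffel h y l j k) differentiable (at x)"
proof -
  have hd: "(\<lambda>y. h y $ i $ j) differentiable (at x)" for i j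
  proof -
    have "iter_pd [] (\<lambda>x. h x $ i $ j) differentiable (at x)" using sm[of i j] x unfolding smooth_fun_def by blast
    then show ?thesis by simp
  qed
  have pdd: "(\<lambda>y. pd m (\<lambda>z. h z $ i $ j) y) differentiable (at x)" for m i j
  proof -
    have "iter_pd [m] (\<lambda>x. h x $ i $ j) differentiable (at x)" using sm[of i j] x unfolding smooth_fun_def by blast
    then show ?thesis by (simp add: eta_contract_eq)
  qed
  have dx: "h x $ 1 $ 1 * h x $ 2 $ 2 - h x $ 1 $ 2 * h x $ 2 $ 1 \<noteq> 0" using inv2_ok(2)[OF inv[OF x]] .
  have idf: "(\<lambda>y. inv2 (h y) $ a $ b) differentiable (at x)" for a b
  proof -
    have "(\<lambda>y. (if a = 1 then (if b = 1 then h y $2$2 else - h y $1$2)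
      else (if b = 1 then - h y $2$1 else h y $1$1)) / (h y $1$1 * h y $2$2 - h y $1$2 * h y $2$1)) differentiable (at x)"
    proof (rule differentiable_divide)
      show "(\<lambda>y. if a = 1 then (if b = 1 then h y $2$2 else - h y $1$2)
        else (if b = 1 then - h y $2$1 else h y $1$1)) differentiable (at x)"
        by (cases "a = 1"; cases "b = 1") (auto intro!: hd differentiable_minus)
      show "(\<lambda>y. h y $1$1 * h y $2$2 - h y $1$2 * h y $2$1) differentiable (at x)"
        by (intro differentiable_diff differentiable_mult hd)
      show "h x $1$1 * h x $2$2 - h x $1$2 * h x $2$1 \<noteq> 0" using dx .
    qed
    then show ?thesis by (simp add: inv2_def)
  qed
  let ?g = "\<lambda>y. (\<Sum>m\<in>UNIV. inv2 (h y) $ l $ m *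
        (pd j (\<lambda>z. h z $ k $ m) y + pd k (\<lambda>z. h z $ j $ m) y - pd m (\<lambda>z. h z $ j $ k) y)) / 2"
  have gd: "?g differentiable (at x)"
    apply (intro differentiable_divide differentiable_sum)
       apply simp
      apply (intro ballI)
      apply (rule differentiable_mult[OF idf])
      apply (intro differentiable_diff differentiable_add pdd)
     apply auto
    done
  have eq: "\<And>y. y \<in> U \<Longrightarrow> christoffel h y l j k = ?g y"
    unfolding christoffel_def using inv2_ok(1)[OF inv] by simp
  show ?thesis by (rule differentiable_local[OF oU x eq gd])
qed

theorem proposition3p5:
  fixes U :: "(real^2) set"
    and J h :: "real^2 \<Rightarrow> real^2^2"
    and k' :: real
  assumes "almost_norden_chart U J h"
    and "const_sect_curv U h k'"
  shows "\<forall>P\<in>cone_domain U.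
     (\<forall>X Y. bil (cone_metric h P) X Y = 0
        \<longrightarrow> bil (cone_metric h P) X X * bil (cone_metric h P) Y Y \<noteq> 0
        \<longrightarrow> cone_xi \<in> span {X, Y}
        \<longrightarrow> curv4 (cone_metric h) P X Y Y X
              / (bil (cone_metric h P) X X * bil (cone_metric h P) Y Y) = 0)
     \<and> tau_star (cone_metric h) (cone_phi J) P = 0
     \<and> tau_star_star (cone_metric h) (cone_phi J) P = tau (cone_metric h) P"
proof -
  have oU: "open U" and sm: "\<And>i j. smooth_fun U (\<lambda>x. h x $ i $ j)"
    and hs: "\<And>x. x \<in> U \<Longrightarrow> transpose (h x) = h x" and hi: "\<And>x. x \<in> U \<Longrightarrow> invertible (h x)"
    and JJ: "\<And>x. x \<in> U \<Longrightarrow> J x ** J x = - mat 1"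
    using assms(1) unfolding almost_norden_chart_def by blast+
  interpret cone_cc U h k'
  proof
    show "open U" by (rule oU)
    show "(\<lambda>y. h y $ i $ j) differentiable (at x)" if "x \<in> U" for i j x
    proof -
      have "iter_pd [] (\<lambda>x. h x $ i $ j) differentiable (at x)" using sm[of i j] that unfolding smooth_fun_def by blast
      then show ?thesis by simp
    qed
    show "h x $ i $ j = h x $ j $ i" if "x \<in> U" for x i j
    proof -
      have "transpose (h x) $ j $ i = h x $ j $ i" using hs[OF that] by simp
      then show ?thesis by (simp add: transpose_def)
    qed
    show "invertible (h x)" if "x \<in> U" for x using hi[OF that] .
    show "(\<lambda>y. christoffel h y l j k) differentiable (at x)" if "x \<in> U" for l j k x
      by (rule Gdiff2[OF oU sm hi that])
    show "const_sect_curv U h k'" by (rule assms(2))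
  qed
  show ?thesis
  proof
    fix P assume P: "P \<in> cone_domain U"
    have u: "cone_base P \<in> U" using inD[OF P] by auto
    note iv = inv_sym[OF hi[OF u] hs[OF u]]
    have tr: "trJ J P = 0"
      unfolding trJ_def T1[OF iv(2) iv(1)] using trace2[OF JJ[OF u]] .
    show "(\<forall>X Y. bil (cone_metric h P) X Y = 0
        \<longrightarrow> bil (cone_metric h P) X X * bil (cone_metric h P) Y Y \<noteq> 0
        \<longrightarrow> cone_xi \<in> span {X, Y}
        \<longrightarrow> curv4 (cone_metric h) P X Y Y X
              / (bil (cone_metric h P) X X * bil (cone_metric h P) Y Y) = 0)
     \<and> tau_star (cone_metric h) (cone_phi J) P = 0
     \<and> tau_star_star (cone_metric h) (cone_phi J) P = tau (cone_metric h) P"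
    proof (intro conjI allI impI)
      fix X Y :: "real^(unit+2)"
      assume "bil (cone_metric h P) X Y = 0" "bil (cone_metric h P) X X * bil (cone_metric h P) Y Y \<noteq> 0"
        "cone_xi \<in> span {X, Y}"
      then show "curv4 (cone_metric h) P X Y Y X
              / (bil (cone_metric h P) X X * bil (cone_metric h P) Y Y) = 0"
        using sect_zero[OF P] by simp
    next
      show "tau_star (cone_metric h) (cone_phi J) P = 0"
        unfolding tau_star_cone[OF P, of J] tr by simp
    next
      show "tau_star_star (cone_metric h) (cone_phi J) P = tau (cone_metric h) P"
        unfolding tau_star_star_cone[of P J, OF P JJ[OF u]] tau_cone[OF P] tr by simp
    qed
  qed
qed

end
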